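(* Let $\mathbf{M}$ be a real $n\times n$ non-negative matrix whose columns all sum to $\alpha$, written in lower block-triangular form with irreducible diagonal blocks $\mathbf{B}_0,\dots,\mathbf{B}_{t-1}$ and coordinate sets $S_0,\dots,S_{t-1}$. Let $s$ be the algebraic multiplicity of the eigenvalue $\rho(\mathbf{M})=\alpha$ and let $j_0,\dots,j_{s-1}$ be the indices of the diagonal blocks having eigenvalue $\alpha$. For each $r\in[s]$ let $\mathbf{l}_{j_r}$ be a left eigenvector of $\mathbf{M}$ for $\alpha$ which equals $1$ on every coordinate of $S_{j_r}$, vanishes on $S_{j_{r'}}$ for $r'\neq r$, and satisfies $\operatorname{supp}(\mathbf{l}_{j_r})\subseteq S_{j_r}\cup\bigcup_{i<j_r,\,i\rightsquigarrow j_r}S_i$. Then \[\sum_{r\in[s]}\mathbf{l}_{j_r}=\mathbf{1},\] the all-ones row vector.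
   Context: Lower block-triangular form: $\mathbf{M}$ has square irreducible non-negative diagonal blocks $\mathbf{B}_0,\dots,\mathbf{B}_{t-1}$ of sizes $n_0,\dots,n_{t-1}$, zero blocks above the diagonal, and non-negative blocks $*_{i,j}$ ($n_i\times n_j$) below the diagonal; $S_j=\{\sum_{i<j}n_i,\dots,\sum_{i\le j}n_i-1\}$. For $i<j$, $i\rightsquigarrow j$ means there is a sequence $i=i_0<i_1<\dots<i_m=j$ with $*_{i_{r+1},i_r}\neq\mathbf{0}$ for all $r$. $[s]=\{0,\dots,s-1\}$. *)

theory Defs
  imports Complex_Main
begin

(* Matrices are functions nat => nat => real, meaningful on indices < n.
   Block sizes ns 0, ..., ns (t-1).  Block j occupies the coordinate set S_j. *)

definition blockset :: "(nat \<Rightarrow> nat) \<Rightarrow> nat \<Rightarrow> nat set" where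
  "blockset ns j = {(\<Sum>i<j. ns i) ..< (\<Sum>i<Suc j. ns i)}"

definition irreducible_on :: "(nat \<Rightarrow> nat \<Rightarrow> real) \<Rightarrow> nat set \<Rightarrow> bool" where
  "irreducible_on M S \<longleftrightarrow>
     (\<forall>p\<in>S. \<forall>q\<in>S. (\<lambda>a b. a \<in> S \<and> b \<in> S \<and> M a b \<noteq> 0)\<^sup>*\<^sup>* p q)"

definition lower_block_triangular ::
  "nat \<Rightarrow> (nat \<Rightarrow> nat \<Rightarrow> real) \<Rightarrow> nat \<Rightarrow> (nat \<Rightarrow> nat) \<Rightarrow> bool" where
  "lower_block_triangular n M t ns \<longleftrightarrow>
     (\<forall>i<t. 0 < ns i) \<and> (\<Sum>i<t. ns i) = n \<and>
     (\<forall>i<t. irreducible_on M (blockset ns i)) \<and>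
     (\<forall>i<t. \<forall>j<t. i < j \<longrightarrow>
        (\<forall>p\<in>blockset ns i. \<forall>q\<in>blockset ns j. M p q = 0))"

definition block_nonzero :: "(nat \<Rightarrow> nat \<Rightarrow> real) \<Rightarrow> (nat \<Rightarrow> nat) \<Rightarrow> nat \<Rightarrow> nat \<Rightarrow> bool" where
  "block_nonzero M ns a b \<longleftrightarrow> (\<exists>p\<in>blockset ns a. \<exists>q\<in>blockset ns b. M p q \<noteq> 0)"

definition leads_to :: "(nat \<Rightarrow> nat \<Rightarrow> real) \<Rightarrow> (nat \<Rightarrow> nat) \<Rightarrow> nat \<Rightarrow> nat \<Rightarrow> bool" where
  "leads_to M ns i j \<longleftrightarrow> (\<lambda>a b. a < b \<and> block_nonzero M ns b a)\<^sup>+\<^sup>+ i j"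

definition block_has_eigenvalue :: "(nat \<Rightarrow> nat \<Rightarrow> real) \<Rightarrow> nat set \<Rightarrow> real \<Rightarrow> bool" where
  "block_has_eigenvalue M S \<alpha> \<longleftrightarrow>
     (\<exists>v :: nat \<Rightarrow> real. (\<exists>p\<in>S. v p \<noteq> 0) \<and>
        (\<forall>p\<in>S. (\<Sum>q\<in>S. M p q * v q) = \<alpha> * v p))"

definition left_eigenvector :: "nat \<Rightarrow> (nat \<Rightarrow> nat \<Rightarrow> real) \<Rightarrow> real \<Rightarrow> (nat \<Rightarrow> real) \<Rightarrow> bool" where
  "left_eigenvector n M \<alpha> l \<longleftrightarrow>
     (\<exists>p<n. l p \<noteq> 0) \<and> (\<forall>q<n. (\<Sum>p<n. l p * M p q) = \<alpha> * l q)"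

end

theory Submission
  imports Defs "Jordan_Normal_Form.Determinant"
begin

lemma left_to_right:
  fixes B :: "nat \<Rightarrow> nat \<Rightarrow> real" and d :: "nat \<Rightarrow> real"
  assumes nz: "\<exists>i<k. d i \<noteq> 0" and ev: "\<forall>j<k. (\<Sum>i<k. d i * B i j) = \<alpha> * d j"
  shows "\<exists>w. (\<exists>i<k. w i \<noteq> 0) \<and> (\<forall>i<k. (\<Sum>j<k. B i j * w j) = \<alpha> * w i)"
proof -
  define A :: "real mat" where "A = mat k k (\<lambda>(j,i). B i j - (if i = j then \<alpha> else 0))"
  have A: "A \<in> carrier_mat k k" unfolding A_def by simp
  have AT: "transpose_mat A \<in> carrier_mat k k" using A by simp
  define v where "v = vec k d"
  have "v \<in> carrier_vec k" unfolding v_def by simp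
  moreover have "v \<noteq> 0\<^sub>v k" using nz unfolding v_def by (auto simp: vec_eq_iff)
  moreover have "A *\<^sub>v v = 0\<^sub>v k"
  proof (rule eq_vecI)
    fix j assume "j < dim_vec (0\<^sub>v k :: real vec)"
    hence j: "j < k" by simp
    have "(A *\<^sub>v v) $ j = (\<Sum>i<k. (B i j - (if i = j then \<alpha> else 0)) * d i)"
      using j unfolding A_def v_def by (simp add: scalar_prod_def row_def lessThan_atLeast0)
    also have "\<dots> = (\<Sum>i<k. d i * B i j) - (\<Sum>i<k. (if i = j then \<alpha> else 0) * d i)"
      by (simp add: algebra_simps sum_subtractf)
    also have "(\<Sum>i<k. (if i = j then \<alpha> else 0) * d i) = (\<Sum>i<k. if i = j then \<alpha> * d i else 0)"
      by (intro sum.cong) auto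
    also have "\<dots> = \<alpha> * d j" using j by simp
    finally show "(A *\<^sub>v v) $ j = 0\<^sub>v k $ j" using ev j by simp
  qed (simp add: A_def)
  ultimately have "det A = 0" using det_0_iff_vec_prod_zero[OF A] by blast
  hence "det (transpose_mat A) = 0" using det_transpose[OF A] by simp
  then obtain w where w: "w \<in> carrier_vec k" "w \<noteq> 0\<^sub>v k" "transpose_mat A *\<^sub>v w = 0\<^sub>v k"
    using det_0_iff_vec_prod_zero[OF AT] by blast
  show ?thesis
  proof (intro exI[of _ "\<lambda>i. w $ i"] conjI allI impI)
    show "\<exists>i<k. w $ i \<noteq> 0" using w(1,2) by (auto simp: vec_eq_iff)
    fix i assume i: "i < k"
    have "0 = (transpose_mat A *\<^sub>v w) $ i" using w(3) i by simp
    also have "\<dots> = (\<Sum>j<k. (B i j - (if i = j then \<alpha> else 0)) * w $ j)"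
      using i w(1) unfolding A_def by (simp add: scalar_prod_def row_def lessThan_atLeast0)
    also have "\<dots> = (\<Sum>j<k. B i j * w $ j) - (\<Sum>j<k. (if i = j then \<alpha> else 0) * w $ j)"
      by (simp add: algebra_simps sum_subtractf)
    also have "(\<Sum>j<k. (if i = j then \<alpha> else 0) * w $ j) = (\<Sum>j<k. if i = j then \<alpha> * w $ j else 0)"
      by (intro sum.cong) auto
    also have "\<dots> = \<alpha> * w $ i" using i by simp
    finally show "(\<Sum>j<k. B i j * w $ j) = \<alpha> * w $ i" by simp
  qed
qed

lemma sum_shift_ivl: "(\<Sum>p\<in>{a..<b::nat}. f p) = (\<Sum>i<b-a. f (a+i))"
  by (simp add: sum.atLeastLessThan_shift_0[of f a b] lessThan_atLeast0 comp_def)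

lemma shift_block:
  fixes M :: "nat \<Rightarrow> nat \<Rightarrow> real" and d :: "nat \<Rightarrow> real"
  assumes nz: "\<exists>p\<in>{a..<b}. d p \<noteq> 0"
    and ev: "\<forall>q\<in>{a..<b}. (\<Sum>p\<in>{a..<b}. d p * M p q) = \<alpha> * d q"
  shows "block_has_eigenvalue M {a..<b} \<alpha>"
proof -
  let ?k = "b - a"
  have h1: "\<exists>i<?k. d (a+i) \<noteq> 0"
  proof -
    from nz obtain p where "p \<in> {a..<b}" "d p \<noteq> 0" by blast
    thus ?thesis by (intro exI[of _ "p - a"]) auto
  qed
  have h2: "\<forall>j<?k. (\<Sum>i<?k. d (a+i) * M (a+i) (a+j)) = \<alpha> * d (a+j)"
  proof (intro allI impI)
    fix j assume "j < ?k"
    hence "a + j \<in> {a..<b}" by auto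
    thus "(\<Sum>i<?k. d (a+i) * M (a+i) (a+j)) = \<alpha> * d (a+j)"
      using ev sum_shift_ivl[of "\<lambda>p. d p * M p (a+j)" a b] by simp
  qed
  obtain w where w: "\<exists>i<?k. w i \<noteq> 0"
      "\<forall>i<?k. (\<Sum>j<?k. M (a+i) (a+j) * w j) = \<alpha> * w i"
    using left_to_right[OF h1, of "\<lambda>i j. M (a+i) (a+j)" \<alpha>] h2 by blast
  show ?thesis unfolding block_has_eigenvalue_def
  proof (intro exI[of _ "\<lambda>q. w (q - a)"] conjI ballI)
    from w(1) obtain i where "i < ?k" "w i \<noteq> 0" by blast
    thus "\<exists>p\<in>{a..<b}. w (p - a) \<noteq> 0" by (intro bexI[of _ "a+i"]) auto
  next
    fix p assume p: "p \<in> {a..<b}"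
    have "(\<Sum>q\<in>{a..<b}. M p q * w (q - a)) = (\<Sum>j<?k. M p (a+j) * w j)"
      using sum_shift_ivl[of "\<lambda>q. M p q * w (q - a)" a b] by simp
    also have "\<dots> = \<alpha> * w (p - a)"
    proof -
      have i: "p - a < ?k" and pe: "a + (p - a) = p" using p by auto
      have "(\<Sum>j<?k. M (a + (p - a)) (a+j) * w j) = \<alpha> * w (p - a)" using w(2) i by blast
      thus ?thesis unfolding pe .
    qed
    finally show "(\<Sum>q\<in>{a..<b}. M p q * w (q - a)) = \<alpha> * w (p - a)" .
  qed
qed

theorem mainTheorem3:
  fixes n t :: nat and M :: "nat \<Rightarrow> nat \<Rightarrow> real" and ns :: "nat \<Rightarrow> nat"
    and \<alpha> :: real and J :: "nat set" and l :: "nat \<Rightarrow> nat \<Rightarrow> real"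
  assumes nonneg: "\<forall>p<n. \<forall>q<n. 0 \<le> M p q"
    and colsum: "\<forall>q<n. (\<Sum>p<n. M p q) = \<alpha>"
    and lbt: "lower_block_triangular n M t ns"
    and J_def: "J = {j. j < t \<and> block_has_eigenvalue M (blockset ns j) \<alpha>}"
    and eig: "\<forall>j\<in>J. left_eigenvector n M \<alpha> (l j)"
    and one: "\<forall>j\<in>J. \<forall>p\<in>blockset ns j. l j p = 1"
    and zero: "\<forall>j\<in>J. \<forall>j'\<in>J. j' \<noteq> j \<longrightarrow> (\<forall>p\<in>blockset ns j'. l j p = 0)"
    and supp: "\<forall>j\<in>J. \<forall>p<n. l j p \<noteq> 0 \<longrightarrow>
                 p \<in> blockset ns j \<or> (\<exists>i<j. leads_to M ns i j \<and> p \<in> blockset ns i)"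
  shows "\<forall>q<n. (\<Sum>j\<in>J. l j q) = 1"

proof -
  define c where "c k = (\<Sum>i<k. ns i)" for k
  have bs: "blockset ns j = {c j..<c (Suc j)}" for j unfolding blockset_def c_def by simp
  have cn: "c t = n" using lbt unfolding lower_block_triangular_def c_def by simp
  have upz: "\<And>i j p q. i < t \<Longrightarrow> j < t \<Longrightarrow> i < j \<Longrightarrow> p \<in> blockset ns i \<Longrightarrow> q \<in> blockset ns j \<Longrightarrow> M p q = 0"
    using lbt unfolding lower_block_triangular_def by blast
  have cmono: "i \<le> j \<Longrightarrow> c i \<le> c j" for i j
    unfolding c_def by (rule sum_mono2) auto
  have cover: "p < c m \<Longrightarrow> \<exists>j<m. p \<in> blockset ns j" for p m
  proof (induction m)
    case 0 thus ?case by (simp add: c_def)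
  next
    case (Suc m)
    show ?case
    proof (cases "p < c m")
      case True thus ?thesis using Suc.IH by (meson less_SucI)
    next
      case False thus ?thesis using Suc.prems by (intro exI[of _ m]) (auto simp: bs)
    qed
  qed
  have disj: "i < j \<Longrightarrow> p \<in> blockset ns i \<Longrightarrow> p \<notin> blockset ns j" for i j p
    using cmono[of "Suc i" j] by (auto simp: bs)
  have bsub: "j < t \<Longrightarrow> blockset ns j \<subseteq> {..<n}" for j
    using cmono[of "Suc j" t] cn by (auto simp: bs)
  have Jsub: "J \<subseteq> {..<t}" using J_def by auto
  hence finJ: "finite J" using finite_subset by blast
  define d where "d q = 1 - (\<Sum>j\<in>J. l j q)" for q
  have d_eig: "(\<Sum>p<n. d p * M p q) = \<alpha> * d q" if q: "q < n" for q
  proof -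
    have "(\<Sum>p<n. d p * M p q) = (\<Sum>p<n. M p q) - (\<Sum>p<n. (\<Sum>j\<in>J. l j p) * M p q)"
      unfolding d_def by (simp add: algebra_simps sum_subtractf)
    also have "(\<Sum>p<n. (\<Sum>j\<in>J. l j p) * M p q) = (\<Sum>j\<in>J. \<Sum>p<n. l j p * M p q)"
      by (simp add: sum_distrib_right sum.swap[of _ "{..<n}"])
    also have "\<dots> = (\<Sum>j\<in>J. \<alpha> * l j q)"
      using eig q unfolding left_eigenvector_def by (intro sum.cong) auto
    finally show ?thesis using colsum q unfolding d_def
      by (simp add: sum_distrib_left algebra_simps)
  qed
  have dJ: "d p = 0" if j: "j \<in> J" and p: "p \<in> blockset ns j" for j p
  proof -
    have "(\<Sum>j'\<in>J. l j' p) = l j p + (\<Sum>j'\<in>J - {j}. l j' p)"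
      using finJ j by (simp add: sum.remove)
    also have "(\<Sum>j'\<in>J - {j}. l j' p) = 0"
      using zero j p by (intro sum.neutral) auto
    finally show ?thesis unfolding d_def using one j p by simp
  qed
  have main: "\<forall>p\<in>blockset ns j. d p = 0" if "j < t" for j
    using that
  proof (induction "t - j" arbitrary: j rule: less_induct)
    case less
    show ?case
    proof (cases "j \<in> J")
      case True thus ?thesis using dJ by blast
    next
      case False
      show ?thesis
      proof (rule ccontr)
        assume nz: "\<not> (\<forall>p\<in>blockset ns j. d p = 0)"
        have "\<forall>q\<in>{c j..<c (Suc j)}. (\<Sum>p\<in>{c j..<c (Suc j)}. d p * M p q) = \<alpha> * d q"
        proof
          fix q assume qS: "q \<in> {c j..<c (Suc j)}"
          hence qb: "q \<in> blockset ns j" by (simp add: bs)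
          hence qn: "q < n" using bsub less.prems by blast
          have "(\<Sum>p\<in>blockset ns j. d p * M p q) = (\<Sum>p<n. d p * M p q)"
          proof (rule sum.mono_neutral_left)
            show "finite {..<n}" by simp
            show "blockset ns j \<subseteq> {..<n}" using bsub less.prems .
            show "\<forall>p\<in>{..<n} - blockset ns j. d p * M p q = 0"
            proof
              fix p assume "p \<in> {..<n} - blockset ns j"
              hence pn: "p < n" and pj: "p \<notin> blockset ns j" by auto
              obtain i where i: "i < t" "p \<in> blockset ns i" using cover[of p t] pn cn by auto
              have "i \<noteq> j" using i pj by auto
              hence "i < j \<or> j < i" by arith
              thus "d p * M p q = 0"
              proof
                assume "i < j" thus ?thesis using upz[OF i(1) less.prems _ i(2) qb] by simp
              next
                assume "j < i"
                hence "t - i < t - j" using i(1) by arith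
                thus ?thesis using less.hyps[of i] i by auto
              qed
            qed
          qed
          thus "(\<Sum>p\<in>{c j..<c (Suc j)}. d p * M p q) = \<alpha> * d q"
            using d_eig[OF qn] by (simp add: bs)
        qed
        moreover have "\<exists>p\<in>{c j..<c (Suc j)}. d p \<noteq> 0" using nz by (simp add: bs)
        ultimately have "block_has_eigenvalue M (blockset ns j) \<alpha>"
          unfolding bs by (intro shift_block) auto
        thus False using False less.prems J_def by auto
      qed
    qed
  qed
  show ?thesis
  proof (intro allI impI)
    fix q assume "q < n"
    then obtain j where "j < t" "q \<in> blockset ns j" using cover[of q t] cn by auto
    hence "d q = 0" using main by blast
    thus "(\<Sum>j\<in>J. l j q) = 1" unfolding d_def by simp
  qed
qed

end
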